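(* For every integer $n\ge 0$, $$\int_0^1 Q_n(u;0,1)\,du=2^n B_n\!\left(\tfrac12\right),$$ where $Q_n(u;0,1)=\sum_{k=1}^{n+1}M_{n+1,k}\,u^{n+1-k}(u-1)^{k-1}$.
   Context: The MacMahon numbers $M_{n,k}$ ($n\ge1$, $1\le k\le n$) are defined by $M_{n,1}=1$ for all $n\ge1$ and, for $n\ge 2$, $2\le k\le n$, $M_{n,k}=(2k-1)M_{n-1,k}+(2n-2k+1)M_{n-1,k-1}$, with the convention $M_{n-1,n}=0$. For $a,b\in\mathbb{C}$ the derivative polynomial is $Q_n(u;a,b)=\sum_{k=1}^{n+1}M_{n+1,k}(u-a)^{n+1-k}(u-b)^{k-1}$. The Bernoulli polynomials $B_n(w)$ are defined by $\sum_{n\ge0}B_n(w)\frac{t^n}{n!}=\frac{t e^{wt}}{e^t-1}$. *)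

theory Defs
  imports "HOL-Analysis.Analysis" "HOL-Computational_Algebra.Formal_Power_Series"
begin

text \<open>MacMahon numbers M n k (n \<ge> 1, 1 \<le> k \<le> n); value 0 outside that range
  (in particular M (n-1) n = 0, as in the stated convention).\<close>
fun macmahon :: "nat \<Rightarrow> nat \<Rightarrow> nat" where
  "macmahon 0 k = 0"
| "macmahon (Suc 0) k = (if k = 1 then 1 else 0)"
| "macmahon (Suc (Suc m)) k =
     (if k = 1 then 1
      else if 2 \<le> k \<and> k \<le> Suc (Suc m) then
        (2*k - 1) * macmahon (Suc m) k + (2*(Suc (Suc m)) - 2*k + 1) * macmahon (Suc m) (k - 1)
      else 0)"

definition Qpoly :: "nat \<Rightarrow> real \<Rightarrow> real \<Rightarrow> real \<Rightarrow> real" where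
  "Qpoly n u a b = (\<Sum>k=1..n+1. real (macmahon (n+1) k) * (u - a) ^ (n + 1 - k) * (u - b) ^ (k - 1))"

definition bernoulli_poly :: "nat \<Rightarrow> real \<Rightarrow> real" where
  "bernoulli_poly n w = fact n * fps_nth ((fps_X * fps_exp w) / (fps_exp 1 - 1)) n"

end

theory Submission
  imports Defs
begin


lemma mac_0[simp]: "macmahon n 0 = 0"
  by (induction n "0::nat" rule: macmahon.induct) auto

lemma mac_1[simp]: "macmahon (Suc m) (Suc 0) = 1"
  by (cases m) auto

lemma mac_big: "k > n \<Longrightarrow> macmahon n k = 0"
  by (induction n k rule: macmahon.induct) auto

lemma mac_rec_nat: "j \<le> Suc m \<Longrightarrow> macmahon (Suc (Suc m)) (Suc j) =
   (2*j+1) * macmahon (Suc m) (Suc j) + (2*(Suc m - j)+1) * macmahon (Suc m) j"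
proof (cases j)
  case 0 then show ?thesis by simp
next
  case (Suc i)
  assume "j \<le> Suc m"
  moreover have "2 * Suc j - 1 = 2*j+1" by simp
  moreover have "2 * Suc (Suc m) - 2 * Suc j + 1 = 2*(Suc m - j)+1" using \<open>j \<le> Suc m\<close> by simp
  ultimately show ?thesis using Suc by (simp only: macmahon.simps) simp
qed

lemma mac_rec: "j \<le> Suc m \<Longrightarrow> real (macmahon (Suc (Suc m)) (Suc j)) =
   (2*j+1) * real (macmahon (Suc m) (Suc j)) + (2*(Suc m - j)+1) * real (macmahon (Suc m) j)"
  by (subst mac_rec_nat) (simp_all only: of_nat_add of_nat_mult of_nat_1 of_nat_numeral)

lemma Qpoly_alt: "Qpoly n u a b = (\<Sum>j\<le>n. real (macmahon (n+1) (j+1)) * (u-a)^(n-j) * (u-b)^j)"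
proof -
  have "Qpoly n u a b = (\<Sum>k=Suc 0..Suc n. real (macmahon (n+1) k) * (u - a) ^ (n + 1 - k) * (u - b) ^ (k - 1))"
    unfolding Qpoly_def by simp
  also have "\<dots> = (\<Sum>j=0..n. real (macmahon (n+1) (j+1)) * (u-a)^(n-j) * (u-b)^j)"
    by (subst sum.shift_bounds_cl_Suc_ivl) simp
  finally show ?thesis by (simp add: atMost_atLeast0)
qed

lemma xpow: "(x::real) * (real j * x^(j-1)) = real j * x^j"
  by (cases j) auto

definition Qd :: "nat \<Rightarrow> real \<Rightarrow> real" where
  "Qd n u = (\<Sum>j\<le>n. real (macmahon (n+1) (j+1)) *
      (real (n-j) * u^(n-j-1) * (u-1)^j + u^(n-j) * (real j * (u-1)^(j-1))))"

lemma Q_deriv: "((\<lambda>v. Qpoly n v 0 1) has_real_derivative Qd n u) (at u)"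
  unfolding Qpoly_alt Qd_def
  by (auto intro!: derivative_eq_intros sum.cong simp: algebra_simps)

lemma Q_rec: "Qpoly (Suc n) u 0 1 = (2*u-1) * Qpoly n u 0 1 + 2*u*(u-1) * Qd n u"
proof -
  let ?M = "\<lambda>j. real (macmahon (n+1) (j+1))"
  have termeq: "(2*u-1) * (?M j * u^(n-j) * (u-1)^j) + 2*u*(u-1) * (?M j *
      (real (n-j) * u^(n-j-1) * (u-1)^j + u^(n-j) * (real j * (u-1)^(j-1))))
    = real (2*j+1) * ?M j * u^(Suc n - j) * (u-1)^j + real (2*(n-j)+1) * ?M j * u^(n-j) * (u-1)^(Suc j)"
    if "j \<le> n" for j
  proof -
    have a: "u * (real (n-j) * u^(n-j-1)) = real (n-j) * u^(n-j)" by (rule xpow)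
    have b: "(u-1) * (real j * (u-1)^(j-1)) = real j * (u-1)^j" by (rule xpow)
    have c: "u^(Suc n - j) = u * u^(n-j)" using that by (simp add: Suc_diff_le)
    have "2*u*(u-1) * (?M j *
      (real (n-j) * u^(n-j-1) * (u-1)^j + u^(n-j) * (real j * (u-1)^(j-1))))
      = 2*?M j * (u-1) * (u * (real (n-j) * u^(n-j-1))) * (u-1)^j
        + 2 * ?M j * u * u^(n-j) * ((u-1) * (real j * (u-1)^(j-1)))"
      by (simp add: algebra_simps)
    also have "\<dots> = 2*?M j * (u-1) * (real (n-j) * u^(n-j)) * (u-1)^j
        + 2 * ?M j * u * u^(n-j) * (real j * (u-1)^j)" by (simp only: a b)
    finally show ?thesis using that by (simp add: c algebra_simps of_nat_diff)
  qed
  have "Qpoly (Suc n) u 0 1 = (\<Sum>j\<le>Suc n. real (macmahon (Suc (Suc n)) (Suc j)) * u^(Suc n-j) * (u-1)^j)"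
    by (simp add: Qpoly_alt)
  also have "\<dots> = (\<Sum>j\<le>Suc n. (2*j+1) * real (macmahon (Suc n) (Suc j)) * u^(Suc n-j) * (u-1)^j)
      + (\<Sum>j\<le>Suc n. (2*(Suc n - j)+1) * real (macmahon (Suc n) j) * u^(Suc n-j) * (u-1)^j)"
    unfolding sum.distrib[symmetric]
    by (rule sum.cong[OF refl], subst mac_rec, simp_all add: algebra_simps)
  also have "(\<Sum>j\<le>Suc n. (2*j+1) * real (macmahon (Suc n) (Suc j)) * u^(Suc n-j) * (u-1)^j)
     = (\<Sum>j\<le>n. (2*j+1) * ?M j * u^(Suc n-j) * (u-1)^j)"
    by (simp add: mac_big)
  also have "(\<Sum>j\<le>Suc n. (2*(Suc n - j)+1) * real (macmahon (Suc n) j) * u^(Suc n-j) * (u-1)^j)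
     = (\<Sum>j\<le>n. (2*(n-j)+1) * ?M j * u^(n-j) * (u-1)^(Suc j))"
    by (subst sum.atMost_Suc_shift) simp
  also have "(\<Sum>j\<le>n. (2*j+1) * ?M j * u^(Suc n-j) * (u-1)^j) + (\<Sum>j\<le>n. (2*(n-j)+1) * ?M j * u^(n-j) * (u-1)^(Suc j))
     = (\<Sum>j\<le>n. (2*u-1) * (?M j * u^(n-j) * (u-1)^j) + 2*u*(u-1) * (?M j *
      (real (n-j) * u^(n-j-1) * (u-1)^j + u^(n-j) * (real j * (u-1)^(j-1)))))"
    unfolding sum.distrib[symmetric] by (rule sum.cong[OF refl], rule termeq[symmetric], simp)
  also have "\<dots> = (2*u-1) * Qpoly n u 0 1 + 2*u*(u-1) * Qd n u"
    by (simp add: Qpoly_alt Qd_def sum.distrib sum_distrib_left)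
  finally show ?thesis .
qed



definition EE :: "real fps" where "EE = fps_exp (-1)"
definition YY :: "real fps" where "YY = 1 - fps_exp (-2)"
definition Cf :: "nat \<Rightarrow> real fps" where "Cf m = EE * YY^m"
definition cc :: "nat \<Rightarrow> nat \<Rightarrow> real" where "cc n m = fact n * fps_nth (Cf m) n"

lemma YY0[simp]: "fps_nth YY 0 = 0" by (simp add: YY_def)

lemma YYpow_zero: "k < m \<Longrightarrow> fps_nth (YY^m) k = 0"
  using startsby_zero_power_prefix[OF YY0] by blast

lemma Cf_zero: "k < m \<Longrightarrow> fps_nth (Cf m) k = 0"
  unfolding Cf_def fps_mult_nth by (intro sum.neutral) (auto simp: YYpow_zero)

lemma cc_zero: "k < m \<Longrightarrow> cc k m = 0"
  by (simp add: cc_def Cf_zero)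

lemma deriv_YY: "fps_deriv YY = fps_const 2 * (1 - YY)"
  by (rule fps_ext) (simp add: YY_def)

lemma deriv_EE: "fps_deriv EE = - EE"
  by (rule fps_ext) (simp add: EE_def)

lemma deriv_Cf: "fps_deriv (Cf m) = fps_const (2 * real m) * Cf (m - 1) - fps_const (2 * real m + 1) * Cf m"
proof (cases m)
  case 0 then show ?thesis by (simp add: Cf_def deriv_EE)
next
  case (Suc k)
  have dp: "fps_deriv (YY^m) = of_nat m * (fps_const 2 * (1 - YY)) * YY^k"
    by (simp only: fps_deriv_power' Suc diff_Suc_1 deriv_YY)
  have "fps_deriv (Cf m) = EE * (of_nat m * (fps_const 2 * (1 - YY)) * YY^k) - EE * YY^m"
    unfolding Cf_def fps_deriv_mult dp deriv_EE by simp
  also have "\<dots> = fps_const (2 * real m) * (EE * YY^k) - fps_const (2 * real m) * (EE * YY^m) - EE * YY^m"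
  proof -
    have a: "(of_nat m :: real fps) * fps_const 2 = fps_const (2 * real m)" by (metis fps_const_mult fps_of_nat mult.commute)
    have b: "YY^m = YY * YY^k" by (simp add: Suc)
    have aux: "\<And>(e::real fps) n t y p. e * (n * (t * (1 - y)) * p) - e * (y*p) = (n*t) * (e*p) - (n*t)*(e*(y*p)) - e*(y*p)"
      by (simp add: algebra_simps)
    show ?thesis unfolding b aux a by simp
  qed
  also have "\<dots> = fps_const (2 * real m) * Cf (m - 1) - fps_const (2 * real m + 1) * Cf m"
  proof -
    have c: "fps_const (2 * real m + 1) = fps_const (2 * real m) + (1::real fps)"
      by (metis fps_const_add fps_const_1_eq_1)
    have d: "m - 1 = k" "YY^m = YY * YY^k" using Suc by auto
    have aux2: "\<And>(K::real fps) e p y. K*(e*p) - K*(e*(y*p)) - e*(y*p) = K*(e*p) - (K+1)*(e*(y*p))"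
      by (simp add: algebra_simps)
    show ?thesis unfolding c Cf_def d aux2 ..
  qed
  finally show ?thesis .
qed

lemma cc_rec: "cc (Suc n) m = 2 * real m * cc n (m - 1) - (2 * real m + 1) * cc n m"
proof -
  have "cc (Suc n) m = fact n * fps_nth (fps_deriv (Cf m)) n"
    by (simp add: cc_def algebra_simps)
  also have "\<dots> = 2 * real m * cc n (m - 1) - (2 * real m + 1) * cc n m"
    by (simp add: deriv_Cf cc_def algebra_simps)
  finally show ?thesis .
qed

definition PP :: "nat \<Rightarrow> real \<Rightarrow> real" where "PP n u = (\<Sum>m\<le>n. cc n m * u^m)"
definition Pd :: "nat \<Rightarrow> real \<Rightarrow> real" where "Pd n u = (\<Sum>m\<le>n. cc n m * (real m * u^(m-1)))"

lemma P_deriv: "((\<lambda>v. PP n v) has_real_derivative Pd n u) (at u)"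
  unfolding PP_def Pd_def
  by (auto intro!: derivative_eq_intros sum.cong simp: algebra_simps)

lemma P_rec: "PP (Suc n) u = (2*u-1) * PP n u + 2*u*(u-1) * Pd n u"
proof -
  have "PP (Suc n) u = (\<Sum>m\<le>Suc n. 2 * real m * cc n (m - 1) * u^m) - (\<Sum>m\<le>Suc n. (2 * real m + 1) * cc n m * u^m)"
    unfolding PP_def cc_rec by (simp add: sum_subtractf algebra_simps)
  also have "(\<Sum>m\<le>Suc n. (2 * real m + 1) * cc n m * u^m) = (\<Sum>m\<le>n. (2 * real m + 1) * cc n m * u^m)"
    by (simp add: cc_zero)
  also have "(\<Sum>m\<le>Suc n. 2 * real m * cc n (m - 1) * u^m) = (\<Sum>m\<le>n. 2 * real (Suc m) * cc n m * u^(Suc m))"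
    by (subst sum.atMost_Suc_shift) simp
  also have "(\<Sum>m\<le>n. 2 * real (Suc m) * cc n m * u^(Suc m)) - (\<Sum>m\<le>n. (2 * real m + 1) * cc n m * u^m)
     = (\<Sum>m\<le>n. (2*u-1) * (cc n m * u^m) + 2*u*(u-1) * (cc n m * (real m * u^(m-1))))"
    unfolding sum_subtractf[symmetric]
  proof (rule sum.cong[OF refl])
    fix m
    have "u * (real m * u^(m-1)) = real m * u^m" by (rule xpow)
    then have "2*u*(u-1) * (cc n m * (real m * u^(m-1))) = 2*(u-1)*cc n m*(real m * u^m)"
      by (metis (no_types, lifting) mult.assoc mult.left_commute)
    then show "2 * real (Suc m) * cc n m * u^(Suc m) - (2 * real m + 1) * cc n m * u^m
      = (2*u-1) * (cc n m * u^m) + 2*u*(u-1) * (cc n m * (real m * u^(m-1)))"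
      by (simp add: algebra_simps)
  qed
  also have "\<dots> = (2*u-1) * PP n u + 2*u*(u-1) * Pd n u"
    by (simp add: PP_def Pd_def sum.distrib sum_distrib_left)
  finally show ?thesis .
qed

lemma Q_eq_P: "Qpoly n u 0 1 = PP n u"
proof (induction n arbitrary: u)
  case 0 then show ?case by (simp add: Qpoly_def PP_def cc_def Cf_def EE_def)
next
  case (Suc n)
  have fe: "(\<lambda>v. Qpoly n v 0 1) = PP n" using Suc by auto
  have "Qd n u = Pd n u"
    using Q_deriv[of n u] P_deriv[of n u] unfolding fe by (rule DERIV_unique)
  then show ?case using Suc by (simp add: Q_rec P_rec)
qed



lemma integral_P: "integral {0..1} (\<lambda>u. PP n u) = (\<Sum>m\<le>n. cc n m / (real m + 1))"
proof -
  let ?f = "\<lambda>u::real. \<Sum>m\<le>n. cc n m / (real m + 1) * u^(Suc m)"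
  have d: "(?f has_real_derivative PP n x) (at x)" for x
  proof -
    have "(?f has_real_derivative (\<Sum>m\<le>n. cc n m / (real m + 1) * (real (Suc m) * x^(Suc m - 1)))) (at x)"
      by (intro derivative_eq_intros) auto
    moreover have "(\<Sum>m\<le>n. cc n m / (real m + 1) * (real (Suc m) * x^(Suc m - 1))) = PP n x"
      unfolding PP_def
    proof (rule sum.cong[OF refl])
      fix m
      have e: "real (Suc m) = real m + 1" by simp
      have nz: "real m + 1 \<noteq> 0" by linarith
      show "cc n m / (real m + 1) * (real (Suc m) * x^(Suc m - 1)) = cc n m * x^m"
        unfolding e using nz by simp
    qed
    ultimately show ?thesis by simp
  qed
  have vd: "(?f has_vector_derivative PP n x) (at x within {0..1})" for x
    using has_field_derivative_at_within[OF d[of x], of "{0..1}"]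
    unfolding has_real_derivative_iff_has_vector_derivative .
  have "(PP n has_integral (?f 1 - ?f 0)) {0..1}"
    by (rule fundamental_theorem_of_calculus[OF _ vd]) simp
  then have "integral {0..1} (PP n) = ?f 1 - ?f 0" by (rule integral_unique)
  then show ?thesis by simp
qed

definition LL :: "real fps" where "LL = Abs_fps (\<lambda>m. 1 / (real m + 1))"
definition FF :: "real fps" where "FF = Abs_fps (\<lambda>n. \<Sum>m\<le>n. fps_nth LL m * fps_nth (Cf m) n)"

lemma FF_eq: "FF = EE * (LL oo YY)"
proof (rule fps_ext)
  fix n
  have "fps_nth (EE * (LL oo YY)) n = (\<Sum>i=0..n. fps_nth EE i * (\<Sum>j=0..n-i. fps_nth LL j * fps_nth (YY^j) (n-i)))"
    by (simp add: fps_mult_nth fps_compose_nth)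
  also have "\<dots> = (\<Sum>i=0..n. fps_nth EE i * (\<Sum>j=0..n. fps_nth LL j * fps_nth (YY^j) (n-i)))"
  proof (rule sum.cong[OF refl])
    fix i assume i: "i \<in> {0..n}"
    have "(\<Sum>j=0..n. fps_nth LL j * fps_nth (YY^j) (n-i)) = (\<Sum>j=0..n-i. fps_nth LL j * fps_nth (YY^j) (n-i))"
      by (rule sum.mono_neutral_right) (auto simp: YYpow_zero)
    then show "fps_nth EE i * (\<Sum>j=0..n-i. fps_nth LL j * fps_nth (YY^j) (n-i)) =
          fps_nth EE i * (\<Sum>j=0..n. fps_nth LL j * fps_nth (YY^j) (n-i))" by simp
  qed
  also have "\<dots> = (\<Sum>j=0..n. fps_nth LL j * (\<Sum>i=0..n. fps_nth EE i * fps_nth (YY^j) (n-i)))"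
    by (simp add: sum_distrib_left algebra_simps) (rule sum.swap)
  also have "\<dots> = fps_nth FF n"
    by (simp add: FF_def Cf_def fps_mult_nth atMost_atLeast0)
  finally show "fps_nth FF n = fps_nth (EE * (LL oo YY)) n" by simp
qed

definition KK :: "real fps" where "KK = Abs_fps (\<lambda>_. 1)"

lemma KK_inv: "KK * (1 - fps_X) = 1"
proof (rule fps_ext)
  fix n
  show "fps_nth (KK * (1 - fps_X)) n = fps_nth 1 n"
    by (cases n) (simp_all add: KK_def algebra_simps)
qed

lemma deriv_XL: "fps_deriv (fps_X * LL) = KK"
proof (rule fps_ext)
  fix n
  have nz: "real n + 1 \<noteq> 0" by linarith
  show "fps_nth (fps_deriv (fps_X * LL)) n = fps_nth KK n"
    using nz by (simp add: LL_def KK_def del: fps_deriv_mult)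
qed

lemma W_eq: "YY * (LL oo YY) = fps_const 2 * fps_X"
proof -
  have W: "YY * (LL oo YY) = (fps_X * LL) oo YY"
    by (simp add: fps_compose_mult_distrib)
  have k: "(KK oo YY) * (1 - YY) = 1"
  proof -
    have "(KK * (1 - fps_X)) oo YY = 1" by (simp add: KK_inv)
    then show ?thesis by (simp add: fps_compose_mult_distrib fps_compose_sub_distrib)
  qed
  have "fps_deriv ((fps_X * LL) oo YY) = (KK oo YY) * (fps_const 2 * (1 - YY))"
    by (simp only: fps_compose_deriv[OF YY0] deriv_XL deriv_YY)
  also have "\<dots> = fps_const 2 * ((KK oo YY) * (1 - YY))" by (simp only: mult_ac)
  also have "\<dots> = fps_const 2" using k by simp
  also have "\<dots> = fps_deriv (fps_const 2 * fps_X)" by simp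
  finally have "(fps_X * LL) oo YY = fps_const (fps_nth ((fps_X * LL) oo YY) 0 - fps_nth (fps_const 2 * fps_X) 0) + fps_const 2 * fps_X"
    using fps_deriv_eq_iff by blast
  then show ?thesis unfolding W by simp
qed

lemma FF_rel: "FF * (fps_exp 2 - 1) = fps_const 2 * fps_X * fps_exp 1"
proof -
  have e1: "fps_exp (-2) * fps_exp 2 = (1 :: real fps)"
  proof -
    have "fps_exp (-2) * fps_exp 2 = (fps_exp (-2 + 2) :: real fps)" by (simp only: fps_exp_add_mult)
    then show ?thesis by simp
  qed
  have e2: "EE * fps_exp 2 = fps_exp 1"
    by (simp add: EE_def fps_exp_add_mult[symmetric])
  have e1': "fps_exp 2 * fps_exp (-2) = (1 :: real fps)" using e1 by (simp add: mult.commute)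
  have y: "YY * fps_exp 2 = fps_exp 2 - 1" by (simp add: YY_def algebra_simps e1 e1')
  have "FF * (fps_exp 2 - 1) = EE * (YY * (LL oo YY)) * fps_exp 2"
    by (simp add: FF_eq y[symmetric] algebra_simps)
  also have "\<dots> = fps_const 2 * fps_X * (EE * fps_exp 2)"
    by (simp add: W_eq algebra_simps)
  finally show ?thesis by (simp add: e2)
qed



definition Bf :: "real fps" where "Bf = (fps_X * fps_exp (1/2)) / (fps_exp 1 - 1)"

lemma Bf_rel: "Bf * (fps_exp 1 - 1) = fps_X * fps_exp (1/2)"
proof -
  define h :: "real fps" where "h = Abs_fps (\<lambda>n. fps_nth (fps_exp 1) (Suc n))"
  have hX: "fps_exp 1 - 1 = fps_X * h"
  proof (rule fps_ext)
    fix n show "fps_nth (fps_exp 1 - 1) n = fps_nth (fps_X * h) n"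
      by (cases n) (simp_all add: h_def)
  qed
  have h0: "fps_nth h 0 \<noteq> 0" by (simp add: h_def)
  have "fps_X * fps_exp (1/2) = (fps_exp 1 - 1) * (inverse h * fps_exp (1/2))"
    unfolding hX using inverse_mult_eq_1'[OF h0]
    by (metis mult.assoc mult.left_neutral)
  then have "(fps_exp 1 - 1 :: real fps) dvd (fps_X * fps_exp (1/2))" by (rule dvdI)
  then show ?thesis unfolding Bf_def by (rule dvd_div_mult_self)
qed

definition SS :: "real fps \<Rightarrow> real fps" where "SS f = Abs_fps (\<lambda>n. 2^n * fps_nth f n)"

lemma SS_mult: "SS (f * g) = SS f * SS g"
proof (rule fps_ext)
  fix n
  show "fps_nth (SS (f * g)) n = fps_nth (SS f * SS g) n"
    unfolding SS_def fps_mult_nth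
    by (simp add: sum_distrib_left algebra_simps power_add[symmetric])
qed

lemma SS_diff: "SS (f - g) = SS f - SS g"
  by (rule fps_ext) (simp add: SS_def algebra_simps)

lemma SS_1: "SS 1 = 1"
  by (rule fps_ext) (simp add: SS_def)

lemma SS_exp: "SS (fps_exp c) = fps_exp (2 * c)"
  by (rule fps_ext) (simp add: SS_def power_mult_distrib)

lemma SS_X: "SS fps_X = fps_const 2 * fps_X"
proof (rule fps_ext)
  fix n show "fps_nth (SS fps_X) n = fps_nth (fps_const 2 * fps_X) n"
    by (cases n; cases "n - 1") (simp_all add: SS_def)
qed

lemma FF_SS: "FF = SS Bf"
proof -
  have "SS Bf * (fps_exp 2 - 1) = fps_const 2 * fps_X * fps_exp 1"
    using arg_cong[OF Bf_rel, of SS] by (simp add: SS_mult SS_diff SS_1 SS_exp SS_X)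
  then have "(FF - SS Bf) * (fps_exp 2 - 1) = 0"
    using FF_rel by (simp add: algebra_simps)
  moreover have "fps_exp 2 - 1 \<noteq> (0 :: real fps)"
  proof
    assume "fps_exp 2 - 1 = (0 :: real fps)"
    then have "fps_nth (fps_exp 2 - 1 :: real fps) 1 = 0" by simp
    then show False by simp
  qed
  ultimately show ?thesis by simp
qed

theorem theorem4:
  fixes n :: nat
  shows "integral {0..1} (\<lambda>u. Qpoly n u 0 1) = 2 ^ n * bernoulli_poly n (1/2)"
proof -
  have "integral {0..1} (\<lambda>u. Qpoly n u 0 1) = integral {0..1} (\<lambda>u. PP n u)"
    by (simp add: Q_eq_P)
  also have "\<dots> = (\<Sum>m\<le>n. cc n m / (real m + 1))" by (rule integral_P)
  also have "\<dots> = fact n * fps_nth FF n"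
    by (simp add: FF_def LL_def cc_def sum_distrib_left)
  also have "\<dots> = 2 ^ n * bernoulli_poly n (1/2)"
    by (simp add: FF_SS SS_def Bf_def bernoulli_poly_def)
  finally show ?thesis .
qed


end
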